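(* Let $a_n=\min(\sqrt{n},\,n/\lambda^* )$ (with $n/0:=\infty$). Then for every fixed $\beta\in\mathbb{R}^p$ and every $\delta>0$ there exists a real number $M$ such that $$\sup_{n\in\mathbb{N}}P_\beta\big(a_n\|\hat\beta_{AL}-\beta\|>M\big)\le\delta.$$
   Context: For each $n\ge p$: linear regression model $y=X\beta+\varepsilon$ with $y\in\mathbb{R}^n$, non-stochastic $X\in\mathbb{R}^{n\times p}$ ($p$ fixed) of full column rank, unknown $\beta\in\mathbb{R}^p$, and $\varepsilon$ with i.i.d. components of mean zero and finite variance $\sigma^2>0$; $P_\beta$ is the probability when the true parameter is $\beta$. $X'X/n\to C$ positive definite as $n\to\infty$. $\hat\beta_{LS}=(X'X)^{-1}X'y$; the events $\{\hat\beta_{LS,j}=0\}$ have probability zero and are excluded. Non-negative tuning parameters $\lambda_j=\lambda_{n,j}$, $\lambda^*=\max_j\lambda_j$. Adaptive Lasso: $\hat\beta_{AL}=\arg\min_{b\in\mathbb{R}^p}\big(\|y-Xb\|^2+2\sum_{j=1}^p\lambda_j|b_j|/|\hat\beta_{LS,j}|\big)$. *)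

theory Defs
  imports "HOL-Probability.Probability"
begin

text \<open>Design: for sample size n, the design matrix has rows X n i (i < n),
  each a vector in R^p (p = CARD('p)). Errors: eps i, i = 0,1,2,...;
  the sample of size n uses eps 0, ..., eps (n-1).\<close>

definition gram :: "(nat \<Rightarrow> real^'p) \<Rightarrow> nat \<Rightarrow> real^'p^'p" where
  "gram Xn n = (\<chi> j k. \<Sum>i<n. Xn i $ j * Xn i $ k)"

definition Xty :: "(nat \<Rightarrow> real^'p) \<Rightarrow> nat \<Rightarrow> (nat \<Rightarrow> real) \<Rightarrow> real^'p" where
  "Xty Xn n y = (\<chi> j. \<Sum>i<n. Xn i $ j * y i)"

definition beta_LS :: "(nat \<Rightarrow> real^'p) \<Rightarrow> nat \<Rightarrow> (nat \<Rightarrow> real) \<Rightarrow> real^'p" where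
  "beta_LS Xn n y = matrix_inv (gram Xn n) *v Xty Xn n y"

definition AL_obj :: "(nat \<Rightarrow> real^'p) \<Rightarrow> nat \<Rightarrow> ('p \<Rightarrow> real) \<Rightarrow> (nat \<Rightarrow> real) \<Rightarrow> real^'p \<Rightarrow> real" where
  "AL_obj Xn n lam y b =
     (\<Sum>i<n. (y i - Xn i \<bullet> b)\<^sup>2)
     + 2 * (\<Sum>j\<in>UNIV. lam j * \<bar>b $ j\<bar> / \<bar>beta_LS Xn n y $ j\<bar>)"

definition beta_AL :: "(nat \<Rightarrow> real^'p) \<Rightarrow> nat \<Rightarrow> ('p \<Rightarrow> real) \<Rightarrow> (nat \<Rightarrow> real) \<Rightarrow> real^'p" where
  "beta_AL Xn n lam y = (ARG_MIN (AL_obj Xn n lam y) b. True)"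

definition resp :: "(nat \<Rightarrow> real^'p) \<Rightarrow> real^'p \<Rightarrow> (nat \<Rightarrow> 'a \<Rightarrow> real) \<Rightarrow> 'a \<Rightarrow> nat \<Rightarrow> real" where
  "resp Xn beta eps \<omega> i = Xn i \<bullet> beta + eps i \<omega>"

definition lam_max :: "('p::finite \<Rightarrow> real) \<Rightarrow> real" where
  "lam_max lam = Max (range lam)"

definition rate :: "nat \<Rightarrow> real \<Rightarrow> real" where
  "rate n lm = (if lm = 0 then sqrt (real n) else min (sqrt (real n)) (real n / lm))"

end

theory Submission
  imports Defs
begin



lemma quad_gram: "v \<bullet> (gram Xn n *v v) = (\<Sum>i<n. (Xn i \<bullet> v)\<^sup>2)"
proof -
  have "v \<bullet> (gram Xn n *v v) = (\<Sum>j\<in>UNIV. v $ j * (\<Sum>k\<in>UNIV. (\<Sum>i<n. Xn i $ j * Xn i $ k) * v $ k))"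
    unfolding gram_def matrix_vector_mult_def inner_vec_def by simp
  also have "\<dots> = (\<Sum>j\<in>UNIV. \<Sum>k\<in>UNIV. \<Sum>i<n. (Xn i $ j * v $ j) * (Xn i $ k * v $ k))"
    by (simp add: sum_distrib_left sum_distrib_right mult.assoc mult.left_commute)
  also have "\<dots> = (\<Sum>i<n. \<Sum>j\<in>UNIV. \<Sum>k\<in>UNIV. (Xn i $ j * v $ j) * (Xn i $ k * v $ k))"
    by (subst sum.swap, rule sum.cong, rule refl, rule sum.swap)
  also have "\<dots> = (\<Sum>i<n. (Xn i \<bullet> v)\<^sup>2)"
    unfolding inner_vec_def power2_eq_square
    by (simp add: sum_product)
  finally show ?thesis .
qed



lemma Xty_resp: "Xty Xn n (resp Xn b eps w) = gram Xn n *v b + (\<chi> j. \<Sum>i<n. Xn i $ j * eps i w)"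
proof -
  have "\<And>j. (\<Sum>i<n. Xn i $ j * (\<Sum>k\<in>UNIV. Xn i $ k * b $ k + 0)) = (\<Sum>k\<in>UNIV. (\<Sum>i<n. Xn i $ j * Xn i $ k) * b $ k)"
    by (simp add: sum_distrib_left sum_distrib_right mult.assoc, rule sum.swap)
  then show ?thesis
    unfolding Xty_def gram_def resp_def matrix_vector_mult_def inner_vec_def
    by (simp add: vec_eq_iff distrib_left sum.distrib)
qed

lemma quad_bound:
  fixes D :: "real^'n^'n"
  shows "\<bar>v \<bullet> (D *v v)\<bar> \<le> (\<Sum>i\<in>UNIV. \<Sum>j\<in>UNIV. \<bar>D $ i $ j\<bar>) * (norm v)\<^sup>2"
proof -
  have 1: "\<bar>v \<bullet> (D *v v)\<bar> \<le> norm v * norm (D *v v)" by (rule Cauchy_Schwarz_ineq2)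
  have "norm (D *v v) \<le> onorm ((*v) D) * norm v" by (rule onorm) simp
  also have "onorm ((*v) D) * norm v \<le> (\<Sum>i\<in>UNIV. \<Sum>j\<in>UNIV. \<bar>D $ i $ j\<bar>) * norm v"
    by (rule mult_right_mono[OF onorm_le_matrix_component_sum]) simp
  finally have 2: "norm (D *v v) \<le> (\<Sum>i\<in>UNIV. \<Sum>j\<in>UNIV. \<bar>D $ i $ j\<bar>) * norm v" .
  have "\<bar>v \<bullet> (D *v v)\<bar> \<le> norm v * ((\<Sum>i\<in>UNIV. \<Sum>j\<in>UNIV. \<bar>D $ i $ j\<bar>) * norm v)"
    by (rule order_trans[OF 1 mult_left_mono[OF 2]]) simp
  then show ?thesis by (simp add: power2_eq_square mult.commute mult.left_commute)
qed

lemma posdef_unif: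
  fixes A :: "real^'n^'n"
  assumes pd: "\<And>v. v \<noteq> 0 \<Longrightarrow> v \<bullet> (A *v v) > 0"
  shows "\<exists>\<mu>>0. \<forall>v. v \<bullet> (A *v v) \<ge> \<mu> * (norm v)\<^sup>2"
proof -
  have cont: "continuous_on (sphere 0 1) (\<lambda>v. v \<bullet> (A *v v))"
    by (intro continuous_intros linear_continuous_on) simp
  have ne: "sphere (0::real^'n) 1 \<noteq> {}"
    by (metis norm_axis_1 mem_sphere_0 empty_iff)
  obtain u where u: "u \<in> sphere 0 1" and umin: "\<And>w. w \<in> sphere 0 1 \<Longrightarrow> u \<bullet> (A *v u) \<le> w \<bullet> (A *v w)"
    using continuous_attains_inf[OF compact_sphere ne cont] by blast
  have "u \<noteq> 0" using u by auto
  then have pos: "u \<bullet> (A *v u) > 0" by (rule pd)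
  show ?thesis
  proof (intro exI[of _ "u \<bullet> (A *v u)"] conjI allI pos)
    fix v :: "real^'n"
    show "u \<bullet> (A *v u) * (norm v)\<^sup>2 \<le> v \<bullet> (A *v v)"
    proof (cases "v = 0")
      case True then show ?thesis by simp
    next
      case False
      define w where "w = (1 / norm v) *\<^sub>R v"
      have "w \<in> sphere 0 1" using False by (simp add: w_def)
      then have "u \<bullet> (A *v u) \<le> w \<bullet> (A *v w)" by (rule umin)
      also have "w \<bullet> (A *v w) = (v \<bullet> (A *v v)) / (norm v)\<^sup>2"
        by (simp add: w_def matrix_vector_mult_scaleR power2_eq_square)
      finally show ?thesis using False by (simp add: field_simps)
    qed
  qed
qed



lemma gram_pd:
  fixes Xn :: "nat \<Rightarrow> real^'a::finite"
  assumes fr: "\<And>b. (\<forall>i<n. Xn i \<bullet> b = 0) \<Longrightarrow> b = 0"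
  shows "\<exists>\<mu>>0. \<forall>v. \<mu> * (norm v)\<^sup>2 \<le> (\<Sum>i<n. (Xn i \<bullet> v)\<^sup>2)"
proof -
  have "\<exists>\<mu>>0. \<forall>v. v \<bullet> (gram Xn n *v v) \<ge> \<mu> * (norm v)\<^sup>2"
  proof (rule posdef_unif)
    fix v :: "real^'a" assume "v \<noteq> 0"
    have "(\<Sum>i<n. (Xn i \<bullet> v)\<^sup>2) \<noteq> 0"
    proof
      assume "(\<Sum>i<n. (Xn i \<bullet> v)\<^sup>2) = 0"
      then have "\<forall>i<n. Xn i \<bullet> v = 0" by (simp add: sum_nonneg_eq_0_iff)
      then show False using fr \<open>v \<noteq> 0\<close> by blast
    qed
    moreover have "(\<Sum>i<n. (Xn i \<bullet> v)\<^sup>2) \<ge> 0" by (simp add: sum_nonneg)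
    ultimately show "v \<bullet> (gram Xn n *v v) > 0" by (simp add: quad_gram)
  qed
  then show ?thesis by (simp add: quad_gram)
qed

lemma unif_c:
  fixes X :: "nat \<Rightarrow> nat \<Rightarrow> real^'p::finite" and C :: "real^'p^'p"
  assumes fullrank: "\<And>n b. n \<ge> CARD('p) \<Longrightarrow> (\<forall>i<n. X n i \<bullet> b = 0) \<Longrightarrow> b = 0"
    and limC: "(\<lambda>n. (1 / real n) *\<^sub>R gram (X n) n) \<longlonglongrightarrow> C"
    and Cpd: "\<And>v. v \<noteq> 0 \<Longrightarrow> v \<bullet> (C *v v) > 0"
  shows "\<exists>c>0. \<forall>n\<ge>CARD('p). \<forall>v. c * real n * (norm v)\<^sup>2 \<le> (\<Sum>i<n. (X n i \<bullet> v)\<^sup>2)"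
proof -
  obtain \<mu> where mu: "\<mu> > 0" "\<And>v. v \<bullet> (C *v v) \<ge> \<mu> * (norm v)\<^sup>2"
    using posdef_unif[OF Cpd] by blast
  define A where "A n = (1 / real n) *\<^sub>R gram (X n) n" for n
  have "(\<lambda>n. \<Sum>i\<in>UNIV. \<Sum>j\<in>UNIV. \<bar>(A n - C) $ i $ j\<bar>) \<longlonglongrightarrow> (\<Sum>i\<in>UNIV. \<Sum>j\<in>UNIV. \<bar>(C - C) $ i $ j\<bar>)"
    unfolding A_def by (intro tendsto_intros limC)
  then have "(\<lambda>n. \<Sum>i\<in>UNIV. \<Sum>j\<in>UNIV. \<bar>(A n - C) $ i $ j\<bar>) \<longlonglongrightarrow> 0" by simp
  then have "eventually (\<lambda>n. (\<Sum>i\<in>UNIV. \<Sum>j\<in>UNIV. \<bar>(A n - C) $ i $ j\<bar>) < \<mu>/2) sequentially"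
    using mu(1) by (intro order_tendstoD(2)) auto
  then obtain N1 where N1: "\<And>n. n \<ge> N1 \<Longrightarrow> (\<Sum>i\<in>UNIV. \<Sum>j\<in>UNIV. \<bar>(A n - C) $ i $ j\<bar>) < \<mu>/2"
    unfolding eventually_sequentially by blast
  have big: "(\<mu>/2) * real n * (norm v)\<^sup>2 \<le> (\<Sum>i<n. (X n i \<bullet> v)\<^sup>2)" if "n \<ge> N1" "n \<ge> 1" for n v
  proof -
    have "\<bar>v \<bullet> ((A n - C) *v v)\<bar> \<le> (\<Sum>i\<in>UNIV. \<Sum>j\<in>UNIV. \<bar>(A n - C) $ i $ j\<bar>) * (norm v)\<^sup>2"
      by (rule quad_bound)
    also have "\<dots> \<le> (\<mu>/2) * (norm v)\<^sup>2"
      using N1[OF that(1)] by (intro mult_right_mono) auto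
    finally have a: "\<bar>v \<bullet> ((A n - C) *v v)\<bar> \<le> (\<mu>/2) * (norm v)\<^sup>2" .
    have "v \<bullet> (A n *v v) = v \<bullet> (C *v v) + v \<bullet> ((A n - C) *v v)"
      by (simp add: matrix_vector_mult_diff_rdistrib inner_diff_right)
    then have "v \<bullet> (A n *v v) \<ge> (\<mu>/2) * (norm v)\<^sup>2" using a mu(2)[of v] by linarith
    moreover have "v \<bullet> (A n *v v) = (\<Sum>i<n. (X n i \<bullet> v)\<^sup>2) / real n"
      unfolding A_def by (simp add: scaleR_matrix_vector_assoc[symmetric] quad_gram)
      
    ultimately show ?thesis using that(2) by (simp add: field_simps)
  qed
  have "\<forall>n. \<exists>\<mu>. n \<ge> CARD('p) \<longrightarrow> \<mu> > 0 \<and> (\<forall>v. \<mu> * (norm v)\<^sup>2 \<le> (\<Sum>i<n. (X n i \<bullet> v)\<^sup>2))"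
    using gram_pd fullrank by metis
  then obtain f where f: "\<And>n v. n \<ge> CARD('p) \<Longrightarrow> f n > 0 \<and> f n * (norm v)\<^sup>2 \<le> (\<Sum>i<n. (X n i \<bullet> v)\<^sup>2)"
    by metis
  define c where "c = Min (insert (\<mu>/2) ((\<lambda>n. f n / real n) ` {CARD('p)..<N1}))"
  have cp: "0 < CARD('p)" by simp
  have cp': "\<And>x. CARD('p) \<le> x \<Longrightarrow> 0 < x" using cp by linarith
  have cpos: "c > 0" unfolding c_def using mu(1) f cp' by (auto intro!: divide_pos_pos)
  have cle1: "c \<le> \<mu>/2" unfolding c_def by (rule Min_le) auto
  have cle2: "c \<le> f n / real n" if "n \<in> {CARD('p)..<N1}" for n unfolding c_def using that by (intro Min_le) auto
  show ?thesis
  proof (intro exI[of _ c] conjI cpos allI impI)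
    fix n v assume n: "CARD('p) \<le> n"
    have n1: "n \<ge> 1" using n cp by linarith
    show "c * real n * (norm v)\<^sup>2 \<le> (\<Sum>i<n. (X n i \<bullet> v)\<^sup>2)"
    proof (cases "n \<ge> N1")
      case True
      have "c * real n * (norm v)\<^sup>2 \<le> (\<mu>/2) * real n * (norm v)\<^sup>2"
        using cle1 by (intro mult_right_mono) auto
      also have "\<dots> \<le> (\<Sum>i<n. (X n i \<bullet> v)\<^sup>2)" by (rule big[OF True n1])
      finally show ?thesis .
    next
      case False
      then have "c \<le> f n / real n" using n by (intro cle2) auto
      then have "c * real n \<le> f n" using n1 by (simp add: field_simps)
      then have "c * real n * (norm v)\<^sup>2 \<le> f n * (norm v)\<^sup>2" by (intro mult_right_mono) auto
      also have "\<dots> \<le> (\<Sum>i<n. (X n i \<bullet> v)\<^sup>2)" using f[OF n] by blast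
      finally show ?thesis .
    qed
  qed
qed


lemma sq_lower: "(y - x)\<^sup>2 \<ge> x\<^sup>2 / 2 - (y::real)\<^sup>2"
proof -
  have "(y - x)\<^sup>2 - (x\<^sup>2 / 2 - y\<^sup>2) = 2 * (y - x/2)\<^sup>2" by (simp add: power2_eq_square field_simps)
  moreover have "2 * (y - x/2)\<^sup>2 \<ge> 0" by simp
  ultimately show ?thesis by linarith
qed

lemma AL_min:
  fixes Xn :: "nat \<Rightarrow> real^'p::finite"
  assumes c: "c > 0" "real n > 0" and cb: "\<And>v. c * real n * (norm v)\<^sup>2 \<le> (\<Sum>i<n. (Xn i \<bullet> v)\<^sup>2)"
    and lam: "\<And>j. lam j \<ge> 0"
  shows "AL_obj Xn n lam y (beta_AL Xn n lam y) \<le> AL_obj Xn n lam y b"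
proof -
  define F where "F = AL_obj Xn n lam y"
  define Y where "Y = (\<Sum>i<n. (y i)\<^sup>2)"
  have Y0: "Y \<ge> 0" unfolding Y_def by (simp add: sum_nonneg)
  have pen: "(\<Sum>j\<in>UNIV. lam j * \<bar>b $ j\<bar> / \<bar>beta_LS Xn n y $ j\<bar>) \<ge> 0" for b
    using lam by (intro sum_nonneg) simp
  have low: "F b \<ge> (c * real n / 2) * (norm b)\<^sup>2 - Y" for b
  proof -
    have "(\<Sum>i<n. (y i - Xn i \<bullet> b)\<^sup>2) \<ge> (\<Sum>i<n. (Xn i \<bullet> b)\<^sup>2 / 2 - (y i)\<^sup>2)"
      by (intro sum_mono sq_lower)
    also have "(\<Sum>i<n. (Xn i \<bullet> b)\<^sup>2 / 2 - (y i)\<^sup>2) = (\<Sum>i<n. (Xn i \<bullet> b)\<^sup>2) / 2 - Y"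
      unfolding Y_def by (simp add: sum_subtractf sum_divide_distrib)
    finally have "(\<Sum>i<n. (y i - Xn i \<bullet> b)\<^sup>2) \<ge> (c * real n / 2) * (norm b)\<^sup>2 - Y"
      using cb[of b] by (simp add: field_simps)
    then show ?thesis unfolding F_def AL_obj_def using pen[of b] by linarith
  qed
  define R where "R = sqrt (2 * (\<bar>F 0\<bar> + Y) / (c * real n))"
  have R0: "R \<ge> 0" unfolding R_def using c Y0 by simp
  have RR: "(c * real n / 2) * R\<^sup>2 = \<bar>F 0\<bar> + Y"
    unfolding R_def using c Y0 by (simp add: field_simps)
  have cj: "continuous_on (cball 0 R) (\<lambda>b. lam j * \<bar>b $ j\<bar> / \<bar>beta_LS Xn n y $ j\<bar>)" for j
    unfolding divide_inverse by (rule continuous_on_mult_right, intro continuous_intros)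
  have cont: "continuous_on (cball 0 R) F"
    unfolding F_def AL_obj_def by (intro continuous_on_add continuous_on_mult_left continuous_on_sum cj) (intro continuous_intros)
  obtain u where u: "u \<in> cball 0 R" and umin: "\<And>b. b \<in> cball 0 R \<Longrightarrow> F u \<le> F b"
    using continuous_attains_inf[OF compact_cball _ cont] R0 by (metis centre_in_cball empty_iff)
  have glob: "F u \<le> F b" for b
  proof (cases "norm b \<le> R")
    case True then show ?thesis using umin by simp
  next
    case False
    have "F u \<le> F 0" using umin R0 by simp
    also have "F 0 \<le> (c * real n / 2) * R\<^sup>2 - Y" using RR by linarith
    also have "(c * real n / 2) * R\<^sup>2 \<le> (c * real n / 2) * (norm b)\<^sup>2"
      using False R0 c by (intro mult_left_mono power_mono) auto
    then have "(c * real n / 2) * R\<^sup>2 - Y \<le> F b" using low[of b] by linarith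
    finally show ?thesis .
  qed
  have "is_arg_min F (\<lambda>b. True) u" unfolding is_arg_min_def using glob by (simp add: not_less)
  then have "is_arg_min F (\<lambda>b. True) (arg_min F (\<lambda>b. True))"
    unfolding arg_min_def by (rule someI)
  then show ?thesis unfolding beta_AL_def F_def is_arg_min_def by (simp add: not_less)
qed

lemma Z_inner: "(\<Sum>i<n. eps i w * (Xn i \<bullet> d)) = (\<chi> j. \<Sum>i<n. Xn i $ j * eps i w) \<bullet> d"
  unfolding inner_vec_def
  by (simp add: sum_distrib_left sum_distrib_right mult_ac, rule sum.swap)

lemma det_bound:
  fixes Xn :: "nat \<Rightarrow> real^'p::finite"
  assumes c: "c > 0" "real n > 0" and cb: "\<And>v. c * real n * (norm v)\<^sup>2 \<le> (\<Sum>i<n. (Xn i \<bullet> v)\<^sup>2)"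
    and lam: "\<And>j. lam j \<ge> 0" and lm: "\<And>j. lam j \<le> lm" and eta: "\<eta> > 0"
    and Lbig: "\<And>j. \<beta> $ j \<noteq> 0 \<Longrightarrow> \<bar>beta_LS Xn n (resp Xn \<beta> eps w) $ j\<bar> \<ge> \<eta>"
  shows "c * real n * norm (beta_AL Xn n lam (resp Xn \<beta> eps w) - \<beta>)
           \<le> 2 * norm (\<chi> j. \<Sum>i<n. Xn i $ j * eps i w) + 2 * real CARD('p) * lm / \<eta>"
proof -
  define y where "y = resp Xn \<beta> eps w"
  define b where "b = beta_AL Xn n lam y"
  define d where "d = b - \<beta>"
  define Z where "Z = (\<chi> j. \<Sum>i<n. Xn i $ j * eps i w)"
  define L where "L = beta_LS Xn n y"
  define P where "P v = (\<Sum>j\<in>UNIV. lam j * \<bar>v $ j\<bar> / \<bar>L $ j\<bar>)" for v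
  define q where "q = (\<Sum>i<n. (Xn i \<bullet> d)\<^sup>2)"
  have lm0: "lm \<ge> 0" using lam lm by (meson order_trans)
  have "AL_obj Xn n lam y b \<le> AL_obj Xn n lam y \<beta>"
    unfolding b_def by (rule AL_min[OF c cb lam])
  moreover have "AL_obj Xn n lam y b = (\<Sum>i<n. (eps i w)\<^sup>2) - 2 * (Z \<bullet> d) + q + 2 * P b"
  proof -
    have "(\<Sum>i<n. (y i - Xn i \<bullet> b)\<^sup>2) = (\<Sum>i<n. (eps i w)\<^sup>2 - 2 * (eps i w * (Xn i \<bullet> d)) + (Xn i \<bullet> d)\<^sup>2)"
      unfolding y_def resp_def d_def by (intro sum.cong refl) (simp add: inner_diff_right power2_eq_square algebra_simps)
    also have "\<dots> = (\<Sum>i<n. (eps i w)\<^sup>2) - 2 * (Z \<bullet> d) + q"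
      unfolding q_def Z_def Z_inner[symmetric] by (simp add: sum.distrib sum_subtractf sum_distrib_left)
    finally show ?thesis unfolding AL_obj_def P_def L_def by simp
  qed
  moreover have "AL_obj Xn n lam y \<beta> = (\<Sum>i<n. (eps i w)\<^sup>2) + 2 * P \<beta>"
    unfolding AL_obj_def P_def L_def y_def resp_def by simp
  ultimately have main: "q \<le> 2 * (Z \<bullet> d) + 2 * (P \<beta> - P b)" by (simp add: algebra_simps)
  have tj: "lam j * \<bar>\<beta> $ j\<bar> / \<bar>L $ j\<bar> - lam j * \<bar>b $ j\<bar> / \<bar>L $ j\<bar> \<le> lm / \<eta> * norm d" for j
  proof (cases "\<beta> $ j = 0")
    case True
    have "lam j * \<bar>b $ j\<bar> / \<bar>L $ j\<bar> \<ge> 0" using lam[of j] by simp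
    moreover have "lm / \<eta> * norm d \<ge> 0" using lm0 eta by simp
    moreover have "lam j * \<bar>\<beta> $ j\<bar> / \<bar>L $ j\<bar> = 0" using True by simp
    ultimately show ?thesis by linarith
  next
    case False
    have Lj: "\<bar>L $ j\<bar> \<ge> \<eta>" using Lbig[OF False] unfolding L_def y_def .
    have wj: "lam j / \<bar>L $ j\<bar> \<le> lm / \<eta>"
      using Lj eta lam[of j] lm[of j] lm0 by (intro frac_le) auto
    have w0: "lam j / \<bar>L $ j\<bar> \<ge> 0" using lam[of j] by simp
    have dj: "\<bar>\<beta> $ j\<bar> - \<bar>b $ j\<bar> \<le> norm d"
    proof -
      have "\<bar>\<beta> $ j\<bar> - \<bar>b $ j\<bar> \<le> \<bar>d $ j\<bar>" unfolding d_def by simp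
      also have "\<dots> \<le> norm d" by (rule component_le_norm_cart)
      finally show ?thesis .
    qed
    have "lam j * \<bar>\<beta> $ j\<bar> / \<bar>L $ j\<bar> - lam j * \<bar>b $ j\<bar> / \<bar>L $ j\<bar>
        = (lam j / \<bar>L $ j\<bar>) * (\<bar>\<beta> $ j\<bar> - \<bar>b $ j\<bar>)" by (simp add: algebra_simps)
    also have "\<dots> \<le> (lam j / \<bar>L $ j\<bar>) * norm d" using w0 dj by (rule mult_left_mono[rotated])
    also have "\<dots> \<le> lm / \<eta> * norm d" using wj by (rule mult_right_mono) simp
    finally show ?thesis .
  qed
  have "P \<beta> - P b = (\<Sum>j\<in>UNIV. lam j * \<bar>\<beta> $ j\<bar> / \<bar>L $ j\<bar> - lam j * \<bar>b $ j\<bar> / \<bar>L $ j\<bar>)"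
    unfolding P_def by (simp add: sum_subtractf)
  also have "\<dots> \<le> (\<Sum>j\<in>(UNIV::'p set). lm / \<eta> * norm d)" by (intro sum_mono tj)
  also have "\<dots> = real CARD('p) * lm / \<eta> * norm d" by simp
  finally have Pb: "P \<beta> - P b \<le> real CARD('p) * lm / \<eta> * norm d" .
  have Zd: "Z \<bullet> d \<le> norm Z * norm d" by (rule norm_cauchy_schwarz)
  have "c * real n * (norm d)\<^sup>2 \<le> q" unfolding q_def by (rule cb)
  then have key: "c * real n * (norm d)\<^sup>2 \<le> (2 * norm Z + 2 * real CARD('p) * lm / \<eta>) * norm d"
  proof -
    have e: "(2 * norm Z + 2 * real CARD('p) * lm / \<eta>) * norm d = 2 * (norm Z * norm d) + 2 * (real CARD('p) * lm / \<eta> * norm d)"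
      by (simp add: algebra_simps)
    have "2 * (Z \<bullet> d) + 2 * (P \<beta> - P b) \<le> 2 * (norm Z * norm d) + 2 * (real CARD('p) * lm / \<eta> * norm d)"
      using Zd Pb by (intro add_mono mult_left_mono) auto
    then show ?thesis unfolding e using main \<open>c * real n * (norm d)\<^sup>2 \<le> q\<close> by (meson order_trans)
  qed
  show ?thesis
  proof (cases "d = 0")
    case True
    then show ?thesis using lm0 eta unfolding d_def b_def y_def by simp
  next
    case False
    then have "norm d > 0" by simp
    with key have "c * real n * norm d \<le> 2 * norm Z + 2 * real CARD('p) * lm / \<eta>"
      by (simp add: power2_eq_square mult.assoc[symmetric] mult_le_cancel_right)
    then show ?thesis unfolding d_def b_def y_def Z_def .
  qed
qed

lemma matrix_inv_props:
  fixes A :: "real^'n^'n"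
  assumes "invertible A"
  shows "A ** matrix_inv A = mat 1" "matrix_inv A ** A = mat 1"
proof -
  have "\<exists>A'. A ** A' = mat 1 \<and> A' ** A = mat 1" using assms unfolding invertible_def by blast
  then have "A ** matrix_inv A = mat 1 \<and> matrix_inv A ** A = mat 1"
    unfolding matrix_inv_def by (rule someI_ex)
  then show "A ** matrix_inv A = mat 1" "matrix_inv A ** A = mat 1" by auto
qed

lemma gram_invertible:
  fixes Xn :: "nat \<Rightarrow> real^'p::finite"
  assumes c: "c > 0" "real n > 0" and cb: "\<And>v. c * real n * (norm v)\<^sup>2 \<le> (\<Sum>i<n. (Xn i \<bullet> v)\<^sup>2)"
  shows "invertible (gram Xn n)"
proof -
  have "\<forall>x. gram Xn n *v x = 0 \<longrightarrow> x = 0"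
  proof (intro allI impI)
    fix x assume "gram Xn n *v x = 0"
    then have "(\<Sum>i<n. (Xn i \<bullet> x)\<^sup>2) = 0" using quad_gram[of x Xn n] by simp
    then have "c * real n * (norm x)\<^sup>2 \<le> 0" using cb[of x] by simp
    then have "(norm x)\<^sup>2 \<le> 0" using c by (simp add: mult_le_0_iff)
    then show "x = 0" by simp
  qed
  then show ?thesis unfolding invertible_left_inverse matrix_left_invertible_ker .
qed

lemma LS_err:
  fixes Xn :: "nat \<Rightarrow> real^'p::finite"
  assumes c: "c > 0" "real n > 0" and cb: "\<And>v. c * real n * (norm v)\<^sup>2 \<le> (\<Sum>i<n. (Xn i \<bullet> v)\<^sup>2)"
  shows "beta_LS Xn n (resp Xn \<beta> eps w) = \<beta> + matrix_inv (gram Xn n) *v (\<chi> j. \<Sum>i<n. Xn i $ j * eps i w)"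
    and "c * real n * norm (beta_LS Xn n (resp Xn \<beta> eps w) - \<beta>) \<le> norm (\<chi> j. \<Sum>i<n. Xn i $ j * eps i w)"
proof -
  define G where "G = gram Xn n"
  define Z where "Z = (\<chi> j. \<Sum>i<n. Xn i $ j * eps i w)"
  have inv: "invertible G" unfolding G_def by (rule gram_invertible[OF c cb])
  note mi = matrix_inv_props[OF inv]
  show eq: "beta_LS Xn n (resp Xn \<beta> eps w) = \<beta> + matrix_inv (gram Xn n) *v Z"
    unfolding beta_LS_def Xty_resp G_def[symmetric]
    by (simp add: matrix_vector_right_distrib matrix_vector_mul_assoc mi Z_def)
  define e where "e = matrix_inv G *v Z"
  have Ge: "G *v e = Z" unfolding e_def by (simp add: matrix_vector_mul_assoc mi)
  have "c * real n * (norm e)\<^sup>2 \<le> e \<bullet> (G *v e)" unfolding G_def quad_gram by (rule cb)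
  also have "\<dots> = e \<bullet> Z" by (simp add: Ge)
  also have "\<dots> \<le> norm e * norm Z" by (rule norm_cauchy_schwarz)
  finally have k: "c * real n * (norm e)\<^sup>2 \<le> norm e * norm Z" .
  have "c * real n * norm e \<le> norm Z"
  proof (cases "e = 0")
    case True then show ?thesis by simp
  next
    case False
    then have "norm e > 0" by simp
    have "(c * real n * norm e) * norm e \<le> norm Z * norm e" using k by (simp add: power2_eq_square mult_ac)
    then show ?thesis using \<open>norm e > 0\<close> by (rule mult_right_le_imp_le)
  qed
  then show "c * real n * norm (beta_LS Xn n (resp Xn \<beta> eps w) - \<beta>) \<le> norm Z"
    unfolding eq e_def G_def by simp
qed

lemma (in prob_space) eps_moments:
  fixes eps :: "nat \<Rightarrow> 'a \<Rightarrow> real"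
  assumes rv: "\<And>i. eps i \<in> borel_measurable M"
    and indep: "indep_vars (\<lambda>_. borel) eps UNIV"
    and ident: "\<And>i. distr M borel (eps i) = distr M borel (eps 0)"
    and mean0: "integrable M (eps 0)" "expectation (eps 0) = 0"
    and finvar: "integrable M (\<lambda>\<omega>. (eps 0 \<omega>)\<^sup>2)"
  shows "integrable M (\<lambda>\<omega>. eps i \<omega> * eps k \<omega>)"
    and "expectation (\<lambda>\<omega>. eps i \<omega> * eps k \<omega>) = (if i = k then expectation (\<lambda>\<omega>. (eps 0 \<omega>)\<^sup>2) else 0)"
proof -
  have tr_int: "integrable M (\<lambda>\<omega>. g (eps l \<omega>)) \<longleftrightarrow> integrable M (\<lambda>\<omega>. g (eps 0 \<omega>))"
    if g: "g \<in> borel_measurable borel" for g :: "real \<Rightarrow> real" and l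
    using integrable_distr_eq[OF rv[of l] g] integrable_distr_eq[OF rv[of 0] g] ident[of l] by simp
  have tr_E: "expectation (\<lambda>\<omega>. g (eps l \<omega>)) = expectation (\<lambda>\<omega>. g (eps 0 \<omega>))"
    if g: "g \<in> borel_measurable borel" for g :: "real \<Rightarrow> real" and l
    using integral_distr[OF rv[of l] g] integral_distr[OF rv[of 0] g] ident[of l] by simp
  have i1: "integrable M (eps l)" for l
    using tr_int[of "\<lambda>x. x" l] mean0(1) by simp
  have e1: "expectation (eps l) = 0" for l
    using tr_E[of "\<lambda>x. x" l] mean0(2) by simp
  have i2: "integrable M (\<lambda>\<omega>. (eps l \<omega>)\<^sup>2)" for l
    using tr_int[of "\<lambda>x. x\<^sup>2" l] finvar by simp
  have e2: "expectation (\<lambda>\<omega>. (eps l \<omega>)\<^sup>2) = expectation (\<lambda>\<omega>. (eps 0 \<omega>)\<^sup>2)" for l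
    using tr_E[of "\<lambda>x. x\<^sup>2" l] by simp
  have "integrable M (\<lambda>\<omega>. eps i \<omega> * eps k \<omega>) \<and>
        expectation (\<lambda>\<omega>. eps i \<omega> * eps k \<omega>) = (if i = k then expectation (\<lambda>\<omega>. (eps 0 \<omega>)\<^sup>2) else 0)"
  proof (cases "i = k")
    case True
    then show ?thesis using i2[of k] e2[of k] by (simp add: power2_eq_square)
  next
    case False
    have ind: "indep_vars (\<lambda>_. borel) eps {i, k}"
      by (rule indep_vars_subset[OF indep]) simp
    have p: "(\<lambda>\<omega>. \<Prod>l\<in>{i, k}. eps l \<omega>) = (\<lambda>\<omega>. eps i \<omega> * eps k \<omega>)"
      using False by simp
    have "integrable M (\<lambda>\<omega>. \<Prod>l\<in>{i, k}. eps l \<omega>)"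
      by (rule indep_vars_integrable) (use ind i1 in auto)
    moreover have "expectation (\<lambda>\<omega>. \<Prod>l\<in>{i, k}. eps l \<omega>) = (\<Prod>l\<in>{i, k}. expectation (eps l))"
      by (rule indep_vars_lebesgue_integral) (use ind i1 in auto)
    ultimately show ?thesis using False e1 unfolding p by simp
  qed
  then show "integrable M (\<lambda>\<omega>. eps i \<omega> * eps k \<omega>)"
    and "expectation (\<lambda>\<omega>. eps i \<omega> * eps k \<omega>) = (if i = k then expectation (\<lambda>\<omega>. (eps 0 \<omega>)\<^sup>2) else 0)"
    by auto
qed

lemma (in prob_space) lin_moment:
  fixes eps :: "nat \<Rightarrow> 'a \<Rightarrow> real" and a :: "nat \<Rightarrow> real"
  assumes int: "\<And>i k. integrable M (\<lambda>\<omega>. eps i \<omega> * eps k \<omega>)"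
    and E: "\<And>i k. expectation (\<lambda>\<omega>. eps i \<omega> * eps k \<omega>) = (if i = k then s2 else 0)"
  shows "integrable M (\<lambda>\<omega>. (\<Sum>i<n. a i * eps i \<omega>)\<^sup>2)"
    and "expectation (\<lambda>\<omega>. (\<Sum>i<n. a i * eps i \<omega>)\<^sup>2) = s2 * (\<Sum>i<n. (a i)\<^sup>2)"
proof -
  have eq: "(\<lambda>\<omega>. (\<Sum>i<n. a i * eps i \<omega>)\<^sup>2) = (\<lambda>\<omega>. \<Sum>i<n. \<Sum>k<n. (a i * a k) * (eps i \<omega> * eps k \<omega>))"
    by (simp add: power2_eq_square sum_product mult_ac)
  show "integrable M (\<lambda>\<omega>. (\<Sum>i<n. a i * eps i \<omega>)\<^sup>2)"
    unfolding eq using int by auto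
  have "expectation (\<lambda>\<omega>. (\<Sum>i<n. a i * eps i \<omega>)\<^sup>2) = (\<Sum>i<n. \<Sum>k<n. (a i * a k) * (if i = k then s2 else 0))"
    unfolding eq using int by (simp add: integral_sum E)
  also have "\<dots> = (\<Sum>i<n. (a i * a i) * s2)"
    by (intro sum.cong refl) (simp add: if_distrib sum.delta cong: if_cong)
  finally show "expectation (\<lambda>\<omega>. (\<Sum>i<n. a i * eps i \<omega>)\<^sup>2) = s2 * (\<Sum>i<n. (a i)\<^sup>2)"
    by (simp add: power2_eq_square sum_distrib_left mult_ac)
qed

lemma (in prob_space) markov_Z:
  fixes eps :: "nat \<Rightarrow> 'a \<Rightarrow> real" and X :: "nat \<Rightarrow> real^'p::finite"
  assumes int: "\<And>i k. integrable M (\<lambda>\<omega>. eps i \<omega> * eps k \<omega>)"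
    and E: "\<And>i k. expectation (\<lambda>\<omega>. eps i \<omega> * eps k \<omega>) = (if i = k then s2 else 0)"
    and t: "t > 0"
  shows "measure M {\<omega>\<in>space M. t \<le> (\<Sum>j\<in>UNIV. (\<Sum>i<n. X i $ j * eps i \<omega>)\<^sup>2)}
           \<le> s2 * (\<Sum>j\<in>UNIV. \<Sum>i<n. (X i $ j)\<^sup>2) / t"
proof -
  have ij: "integrable M (\<lambda>\<omega>. (\<Sum>i<n. X i $ j * eps i \<omega>)\<^sup>2)" for j
    by (rule lin_moment(1)[OF int E])
  have Ej: "expectation (\<lambda>\<omega>. (\<Sum>i<n. X i $ j * eps i \<omega>)\<^sup>2) = s2 * (\<Sum>i<n. (X i $ j)\<^sup>2)" for j
    by (rule lin_moment(2)[OF int E])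
  have iu: "integrable M (\<lambda>\<omega>. \<Sum>j\<in>UNIV. (\<Sum>i<n. X i $ j * eps i \<omega>)\<^sup>2)"
    using ij by auto
  have "measure M {\<omega>\<in>space M. t \<le> (\<Sum>j\<in>UNIV. (\<Sum>i<n. X i $ j * eps i \<omega>)\<^sup>2)}
     \<le> expectation (\<lambda>\<omega>. \<Sum>j\<in>UNIV. (\<Sum>i<n. X i $ j * eps i \<omega>)\<^sup>2) / t"
    by (rule integral_Markov_inequality_measure[OF iu _ _ t, of "space M"]) (auto intro!: sum_nonneg)
  also have "expectation (\<lambda>\<omega>. \<Sum>j\<in>UNIV. (\<Sum>i<n. X i $ j * eps i \<omega>)\<^sup>2) = s2 * (\<Sum>j\<in>UNIV. \<Sum>i<n. (X i $ j)\<^sup>2)"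
    using ij by (simp add: integral_sum Ej sum_distrib_left)
  finally show ?thesis .
qed

lemma (in prob_space) L_small:
  fixes L :: "'p::finite \<Rightarrow> 'a \<Rightarrow> real"
  assumes meas: "\<And>j. L j \<in> borel_measurable M"
    and zero: "\<And>j. measure M {\<omega>\<in>space M. L j \<omega> = 0} = 0" and d: "\<delta> > 0"
  shows "\<exists>\<eta>>0. measure M {\<omega>\<in>space M. \<exists>j. \<bar>L j \<omega>\<bar> < \<eta>} \<le> \<delta>"
proof -
  define S where "S j k = {\<omega>\<in>space M. \<bar>L j \<omega>\<bar> < 1 / Suc k}" for j k
  have Ss: "S j k \<in> sets M" for j k unfolding S_def using meas[of j] by measurable
  have dec: "decseq (S j)" for j
    unfolding S_def decseq_def
  proof (intro allI impI subsetI)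
    fix m n :: nat and x assume mn: "m \<le> n" and x: "x \<in> {\<omega> \<in> space M. \<bar>L j \<omega>\<bar> < 1 / real (Suc n)}"
    have "1 / real (Suc n) \<le> 1 / real (Suc m)" using mn by (intro divide_left_mono) auto
    with x show "x \<in> {\<omega> \<in> space M. \<bar>L j \<omega>\<bar> < 1 / real (Suc m)}" by auto
  qed
  have inter: "(\<Inter>k. S j k) = {\<omega>\<in>space M. L j \<omega> = 0}" for j
  proof
    show "(\<Inter>k. S j k) \<subseteq> {\<omega>\<in>space M. L j \<omega> = 0}"
    proof
      fix x assume x: "x \<in> (\<Inter>k. S j k)"
      then have sp: "x \<in> space M" unfolding S_def by auto
      have "L j x = 0"
      proof (rule ccontr)
        assume "L j x \<noteq> 0"
        then have "\<bar>L j x\<bar> > 0" by simp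
        then obtain k where "inverse (real (Suc k)) < \<bar>L j x\<bar>" using reals_Archimedean by blast
        moreover have "x \<in> S j k" using x by auto
        ultimately show False unfolding S_def by (simp add: inverse_eq_divide)
      qed
      then show "x \<in> {\<omega>\<in>space M. L j \<omega> = 0}" using sp by simp
    qed
    show "{\<omega>\<in>space M. L j \<omega> = 0} \<subseteq> (\<Inter>k. S j k)" unfolding S_def by auto
  qed
  have lim: "(\<lambda>k. measure M (S j k)) \<longlonglongrightarrow> 0" for j
    using finite_Lim_measure_decseq[of "S j"] Ss dec inter zero by auto
  have cp: "real CARD('p) > 0" by simp
  have "eventually (\<lambda>k. measure M (S j k) < \<delta> / CARD('p)) sequentially" for j
    using d cp by (intro order_tendstoD(2)[OF lim]) simp
  then have "eventually (\<lambda>k. \<forall>j. measure M (S j k) < \<delta> / CARD('p)) sequentially"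
    by (rule eventually_all_finite)
  then obtain k where k: "\<And>j. measure M (S j k) < \<delta> / CARD('p)"
    unfolding eventually_sequentially by blast
  have "{\<omega>\<in>space M. \<exists>j. \<bar>L j \<omega>\<bar> < 1 / Suc k} = (\<Union>j\<in>UNIV. S j k)"
    unfolding S_def by auto
  then have "measure M {\<omega>\<in>space M. \<exists>j. \<bar>L j \<omega>\<bar> < 1 / Suc k} \<le> (\<Sum>j\<in>UNIV. measure M (S j k))"
    using finite_measure_subadditive_finite[of UNIV "\<lambda>j. S j k"] Ss by (simp add: image_subset_iff)
  also have "\<dots> \<le> (\<Sum>j\<in>(UNIV::'p set). \<delta> / CARD('p))" using k by (intro sum_mono) (simp add: less_imp_le)
  also have "\<dots> = \<delta>" using cp by simp
  finally show ?thesis by (intro exI[of _ "1 / Suc k"]) simp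
qed

lemma trace_bound:
  fixes X :: "nat \<Rightarrow> nat \<Rightarrow> real^'p::finite" and C :: "real^'p^'p"
  assumes limC: "(\<lambda>n. (1 / real n) *\<^sub>R gram (X n) n) \<longlonglongrightarrow> C"
  shows "\<exists>B>0. \<forall>n\<ge>1. (\<Sum>j\<in>UNIV. \<Sum>i<n. (X n i $ j)\<^sup>2) \<le> B * real n"
proof -
  have "Bseq (\<lambda>n. (1 / real n) *\<^sub>R gram (X n) n)"
    using limC by (intro convergent_imp_Bseq) (auto simp: convergent_def)
  then obtain K where K: "K > 0" "\<And>n. norm ((1 / real n) *\<^sub>R gram (X n) n) \<le> K"
    by (auto elim: BseqE)
  show ?thesis
  proof (intro exI[of _ "real CARD('p) * K"] conjI allI impI)
    show "real CARD('p) * K > 0" using K by simp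
    fix n :: nat assume n: "n \<ge> 1"
    have "(\<Sum>i<n. (X n i $ j)\<^sup>2) \<le> K * real n" for j
    proof -
      have "\<bar>((1 / real n) *\<^sub>R gram (X n) n) $ j $ j\<bar> \<le> norm (((1 / real n) *\<^sub>R gram (X n) n) $ j)"
        by (rule component_le_norm_cart)
      also have "\<dots> \<le> norm ((1 / real n) *\<^sub>R gram (X n) n)" by (rule Finite_Cartesian_Product.norm_nth_le)
      also have "\<dots> \<le> K" by (rule K)
      finally have "\<bar>((1 / real n) *\<^sub>R gram (X n) n) $ j $ j\<bar> \<le> K" .
      moreover have "((1 / real n) *\<^sub>R gram (X n) n) $ j $ j = (\<Sum>i<n. (X n i $ j)\<^sup>2) / real n"
        unfolding gram_def by (simp add: power2_eq_square)
      ultimately have "(\<Sum>i<n. (X n i $ j)\<^sup>2) / real n \<le> K" by (metis abs_ge_self order_trans)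
      then show ?thesis using n by (simp add: field_simps)
    qed
    then have "(\<Sum>j\<in>UNIV. \<Sum>i<n. (X n i $ j)\<^sup>2) \<le> (\<Sum>j\<in>(UNIV::'p set). K * real n)"
      by (intro sum_mono)
    then show "(\<Sum>j\<in>UNIV. \<Sum>i<n. (X n i $ j)\<^sup>2) \<le> real CARD('p) * K * real n" by simp
  qed
qed



theorem proposition1:
  fixes M :: "'a measure"
    and eps :: "nat \<Rightarrow> 'a \<Rightarrow> real"
    and X :: "nat \<Rightarrow> nat \<Rightarrow> real^'p::finite"
    and lam :: "nat \<Rightarrow> 'p \<Rightarrow> real"
    and C :: "real^'p^'p"
    and beta :: "real^'p"
  assumes "prob_space M"
    and rv: "\<And>i. eps i \<in> borel_measurable M"
    and indep: "prob_space.indep_vars M (\<lambda>_. borel) eps UNIV"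
    and ident: "\<And>i. distr M borel (eps i) = distr M borel (eps 0)"
    and mean0: "integrable M (eps 0)" "prob_space.expectation M (eps 0) = 0"
    and finvar: "integrable M (\<lambda>\<omega>. (eps 0 \<omega>)\<^sup>2)"
    and varpos: "prob_space.variance M (eps 0) > 0"
    and fullrank: "\<And>n b. n \<ge> CARD('p) \<Longrightarrow> (\<forall>i<n. X n i \<bullet> b = 0) \<Longrightarrow> b = 0"
    and limC: "(\<lambda>n. (1 / real n) *\<^sub>R gram (X n) n) \<longlonglongrightarrow> C"
    and Cpd: "\<And>v. v \<noteq> 0 \<Longrightarrow> v \<bullet> (C *v v) > 0"
    and lam_nonneg: "\<And>n j. lam n j \<ge> 0"
    and LS_nonzero: "\<And>b n j. n \<ge> CARD('p) \<Longrightarrow>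
        prob_space.prob M {\<omega> \<in> space M. beta_LS (X n) n (resp (X n) b eps \<omega>) $ j = 0} = 0"
  shows "\<forall>\<delta>>0. \<exists>K::real. \<forall>n\<ge>CARD('p).
     prob_space.prob M {\<omega> \<in> space M.
        rate n (lam_max (lam n)) * norm (beta_AL (X n) n (lam n) (resp (X n) beta eps \<omega>) - beta) > K}
       \<le> \<delta>"
proof (intro allI impI)
  fix \<delta> :: real assume \<delta>: "\<delta> > 0"
  interpret P: prob_space M by fact
  have "\<exists>c>0. \<forall>n\<ge>CARD('p). \<forall>v. c * real n * (norm v)\<^sup>2 \<le> (\<Sum>i<n. (X n i \<bullet> v)\<^sup>2)"
    by (rule unif_c[of X C]) (erule (1) fullrank, rule limC, erule Cpd)
  then obtain c where c: "c > 0" and cb: "\<And>n v. n \<ge> CARD('p) \<Longrightarrow> c * real n * (norm v)\<^sup>2 \<le> (\<Sum>i<n. (X n i \<bullet> v)\<^sup>2)"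
    by blast
  have cp: "0 < CARD('p)" by simp
  have npos: "real n > 0" if "n \<ge> CARD('p)" for n
  proof -
    have "n > 0" using that cp by linarith
    then show ?thesis by simp
  qed
  define s2 where "s2 = P.expectation (\<lambda>\<omega>. (eps 0 \<omega>)\<^sup>2)"
  have s20: "s2 \<ge> 0" unfolding s2_def by (intro integral_nonneg_AE) auto
  have mint: "\<And>i k. integrable M (\<lambda>\<omega>. eps i \<omega> * eps k \<omega>)"
    using P.eps_moments(1)[OF rv indep ident mean0 finvar] .
  have mE: "\<And>i k. P.expectation (\<lambda>\<omega>. eps i \<omega> * eps k \<omega>) = (if i = k then s2 else 0)"
    using P.eps_moments(2)[OF rv indep ident mean0 finvar] unfolding s2_def .
  obtain B where B: "B > 0" "\<And>n. n \<ge> 1 \<Longrightarrow> (\<Sum>j\<in>UNIV. \<Sum>i<n. (X n i $ j)\<^sup>2) \<le> B * real n"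
    using trace_bound[OF limC] by blast
  define T where "T = sqrt (2 * s2 * B / \<delta> + 1)"
  have q0: "0 \<le> 2 * s2 * B / \<delta>" using s20 B(1) \<delta> by (intro divide_nonneg_pos mult_nonneg_nonneg) auto
  have T2: "T\<^sup>2 = 2 * s2 * B / \<delta> + 1" unfolding T_def using q0 by simp
  have Tpos: "T > 0" unfolding T_def using q0 by simp
  define Zv where "Zv n \<omega> = (\<chi> j. \<Sum>i<n. X n i $ j * eps i \<omega>)" for n \<omega>
  define Zs where "Zs n \<omega> = (\<Sum>j\<in>UNIV. (\<Sum>i<n. X n i $ j * eps i \<omega>)\<^sup>2)" for n \<omega>
  have normZ: "(norm (Zv n \<omega>))\<^sup>2 = Zs n \<omega>" for n \<omega>
    unfolding power2_norm_eq_inner Zv_def Zs_def inner_vec_def by (simp add: power2_eq_square)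
  define bad1 where "bad1 n = {\<omega>\<in>space M. T\<^sup>2 * real n \<le> Zs n \<omega>}" for n
  have bad1s: "bad1 n \<in> sets M" for n unfolding bad1_def Zs_def using rv by measurable
  have bad1p: "P.prob (bad1 n) \<le> \<delta> / 2" if n: "n \<ge> CARD('p)" for n
  proof -
    have t: "T\<^sup>2 * real n > 0" using Tpos npos[OF n] by simp
    have "P.prob (bad1 n) \<le> s2 * (\<Sum>j\<in>UNIV. \<Sum>i<n. (X n i $ j)\<^sup>2) / (T\<^sup>2 * real n)"
      unfolding bad1_def Zs_def by (rule P.markov_Z[OF mint mE t])
    also have "\<dots> \<le> s2 * (B * real n) / (T\<^sup>2 * real n)"
      using B(2)[of n] n cp s20 t by (intro divide_right_mono mult_left_mono) auto
    also have "\<dots> = s2 * B / T\<^sup>2" using npos[OF n] by simp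
    also have "\<dots> \<le> \<delta> / 2"
    proof -
      have "s2 * B * 2 \<le> \<delta> * T\<^sup>2" unfolding T2 using \<delta> by (simp add: field_simps)
      then show ?thesis using Tpos \<delta> by (simp add: field_simps)
    qed
    finally show ?thesis .
  qed
  define \<eta>0 where "\<eta>0 = Min (insert 1 ((\<lambda>j. \<bar>beta $ j\<bar> / 2) ` {j. beta $ j \<noteq> 0}))"
  have \<eta>0pos: "\<eta>0 > 0" unfolding \<eta>0_def by (subst Min_gr_iff) auto
  have \<eta>0le: "\<eta>0 \<le> \<bar>beta $ j\<bar> / 2" if "beta $ j \<noteq> 0" for j
    unfolding \<eta>0_def using that by (intro Min_le) auto
  define N0 where "N0 = nat \<lceil>(T / (c * \<eta>0))\<^sup>2\<rceil>"
  define L where "L n j \<omega> = beta_LS (X n) n (resp (X n) beta eps \<omega>) $ j" for n j \<omega>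
  have Lmeas: "L n j \<in> borel_measurable M" if n: "n \<ge> CARD('p)" for n j
  proof -
    have "L n j = (\<lambda>\<omega>. beta $ j + (\<Sum>k\<in>UNIV. matrix_inv (gram (X n) n) $ j $ k * (\<Sum>i<n. X n i $ k * eps i \<omega>)))"
      unfolding L_def LS_err(1)[OF c npos[OF n] cb[OF n]] by (simp add: matrix_vector_mult_def)
    also have "\<dots> \<in> borel_measurable M" using rv by measurable
    finally show ?thesis .
  qed
  have "\<forall>n. \<exists>e. n \<ge> CARD('p) \<longrightarrow> e > 0 \<and> P.prob {\<omega>\<in>space M. \<exists>j. \<bar>L n j \<omega>\<bar> < e} \<le> \<delta> / 2"
  proof
    fix n show "\<exists>e. n \<ge> CARD('p) \<longrightarrow> e > 0 \<and> P.prob {\<omega>\<in>space M. \<exists>j. \<bar>L n j \<omega>\<bar> < e} \<le> \<delta> / 2"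
    proof (cases "n \<ge> CARD('p)")
      case True
      have "\<exists>e>0. P.prob {\<omega>\<in>space M. \<exists>j. \<bar>L n j \<omega>\<bar> < e} \<le> \<delta> / 2"
      proof (rule P.L_small)
        fix j
        show "L n j \<in> borel_measurable M" by (rule Lmeas[OF True])
        show "P.prob {\<omega>\<in>space M. L n j \<omega> = 0} = 0" unfolding L_def by (rule LS_nonzero[OF True])
        show "\<delta> / 2 > 0" using \<delta> by simp
      qed
      then show ?thesis by blast
    qed auto
  qed
  from choice[OF this] obtain g where g0: "\<forall>n. n \<ge> CARD('p) \<longrightarrow> g n > 0 \<and> P.prob {\<omega>\<in>space M. \<exists>j. \<bar>L n j \<omega>\<bar> < g n} \<le> \<delta> / 2"
    by blast
  have g: "\<And>n. n \<ge> CARD('p) \<Longrightarrow> g n > 0 \<and> P.prob {\<omega>\<in>space M. \<exists>j. \<bar>L n j \<omega>\<bar> < g n} \<le> \<delta> / 2"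
    using g0 by blast
  define \<eta> where "\<eta> = Min (insert \<eta>0 (g ` {CARD('p)..<N0}))"
  have \<eta>pos: "\<eta> > 0" unfolding \<eta>_def using \<eta>0pos g by (subst Min_gr_iff) auto
  have \<eta>le0: "\<eta> \<le> \<eta>0" unfolding \<eta>_def by (intro Min_le) auto
  have \<eta>leg: "\<eta> \<le> g n" if "n \<in> {CARD('p)..<N0}" for n unfolding \<eta>_def using that by (intro Min_le) auto
  define K where "K = 2 * T / c + 2 * real CARD('p) / (c * \<eta>)"
  show "\<exists>K. \<forall>n\<ge>CARD('p). P.prob {\<omega> \<in> space M.
        K < rate n (lam_max (lam n)) * norm (beta_AL (X n) n (lam n) (resp (X n) beta eps \<omega>) - beta)} \<le> \<delta>"
  proof (intro exI[of _ K] allI impI)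
    fix n assume n: "n \<ge> CARD('p)"
    define bad2 where "bad2 = {\<omega>\<in>space M. \<exists>j. \<bar>L n j \<omega>\<bar> < \<eta>}"
    have bad2s: "bad2 \<in> sets M" unfolding bad2_def using Lmeas[OF n] by measurable
    define bad where "bad = bad1 n \<union> (if n < N0 then bad2 else {})"
    have bads: "bad \<in> sets M" unfolding bad_def using bad1s bad2s by auto
    have badp: "P.prob bad \<le> \<delta>"
    proof (cases "n < N0")
      case True
      have "P.prob bad2 \<le> P.prob {\<omega>\<in>space M. \<exists>j. \<bar>L n j \<omega>\<bar> < g n}"
      proof (rule P.finite_measure_mono)
        show "bad2 \<subseteq> {\<omega>\<in>space M. \<exists>j. \<bar>L n j \<omega>\<bar> < g n}"
          unfolding bad2_def
        proof (intro subsetI)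
          fix x assume x: "x \<in> {\<omega> \<in> space M. \<exists>j. \<bar>L n j \<omega>\<bar> < \<eta>}"
          have "\<eta> \<le> g n" using \<eta>leg[of n] n True by simp
          from x obtain j where "x \<in> space M" "\<bar>L n j x\<bar> < \<eta>" by blast
          with \<open>\<eta> \<le> g n\<close> have "\<bar>L n j x\<bar> < g n" by linarith
          with \<open>x \<in> space M\<close> show "x \<in> {\<omega> \<in> space M. \<exists>j. \<bar>L n j \<omega>\<bar> < g n}" by blast
        qed
        show "{\<omega>\<in>space M. \<exists>j. \<bar>L n j \<omega>\<bar> < g n} \<in> sets M" using Lmeas[OF n] by measurable
      qed
      also have "\<dots> \<le> \<delta> / 2" using g[OF n] by blast
      finally have "P.prob bad2 \<le> \<delta> / 2" .
      moreover have "P.prob bad \<le> P.prob (bad1 n) + P.prob bad2"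
        unfolding bad_def using True bad1s bad2s by (simp add: measure_Un_le)
      ultimately show ?thesis using bad1p[OF n] by linarith
    next
      case False
      then show ?thesis unfolding bad_def using bad1p[OF n] \<delta> by simp
    qed
    have incl: "{\<omega> \<in> space M. K < rate n (lam_max (lam n)) * norm (beta_AL (X n) n (lam n) (resp (X n) beta eps \<omega>) - beta)} \<subseteq> bad"
    proof
      fix \<omega> assume \<omega>: "\<omega> \<in> {\<omega> \<in> space M. K < rate n (lam_max (lam n)) * norm (beta_AL (X n) n (lam n) (resp (X n) beta eps \<omega>) - beta)}"
      show "\<omega> \<in> bad"
      proof (rule ccontr)
        assume nb: "\<omega> \<notin> bad"
        have sp: "\<omega> \<in> space M" using \<omega> by simp
        have "Zs n \<omega> < T\<^sup>2 * real n" using nb sp unfolding bad_def bad1_def by auto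
        then have "(norm (Zv n \<omega>))\<^sup>2 \<le> (T * sqrt (real n))\<^sup>2"
          unfolding normZ by (simp add: power_mult_distrib)
        then have Zle: "norm (Zv n \<omega>) \<le> T * sqrt (real n)"
          by (rule power2_le_imp_le) (use Tpos in simp)
        have Lbig: "\<bar>L n j \<omega>\<bar> \<ge> \<eta>" if bj: "beta $ j \<noteq> 0" for j
        proof (cases "n < N0")
          case True
          then show ?thesis using nb sp unfolding bad_def bad2_def by (auto simp: not_less)
        next
          case False
          have "(T / (c * \<eta>0))\<^sup>2 \<le> real N0" unfolding N0_def by (rule real_nat_ceiling_ge)
          moreover have "real N0 \<le> real n" using False by simp
          ultimately have "(T / (c * \<eta>0))\<^sup>2 \<le> real n" by linarith
          then have "T / (c * \<eta>0) \<le> sqrt (real n)" by (rule real_le_rsqrt)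
          then have sq: "T \<le> \<eta>0 * (c * sqrt (real n))" using c \<eta>0pos by (simp add: divide_le_eq mult_ac)
          have "c * real n * norm (beta_LS (X n) n (resp (X n) beta eps \<omega>) - beta) \<le> norm (Zv n \<omega>)"
            unfolding Zv_def by (rule LS_err(2)[OF c npos[OF n] cb[OF n]])
          also have "\<dots> \<le> T * sqrt (real n)" by (rule Zle)
          also have "\<dots> \<le> \<eta>0 * (c * sqrt (real n)) * sqrt (real n)" using sq by (intro mult_right_mono) auto
          also have "\<dots> = c * real n * \<eta>0" by (simp add: mult_ac)
          finally have "norm (beta_LS (X n) n (resp (X n) beta eps \<omega>) - beta) \<le> \<eta>0"
            using c npos[OF n] by (simp add: mult_le_cancel_left_pos)
          then have "\<bar>L n j \<omega> - beta $ j\<bar> \<le> \<eta>0"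
            unfolding L_def using component_le_norm_cart[of "beta_LS (X n) n (resp (X n) beta eps \<omega>) - beta" j]
            by simp
          then show ?thesis using \<eta>0le[OF bj] \<eta>le0 by linarith
        qed
        define lm where "lm = lam_max (lam n)"
        have lmge: "lam n j \<le> lm" for j unfolding lm_def lam_max_def by (intro Max_ge) auto
        have lm0: "lm \<ge> 0" using lmge[of undefined] lam_nonneg[of n undefined] by linarith
        define r where "r = rate n lm"
        have r0: "r \<ge> 0" unfolding r_def rate_def using lm0 by simp
        have r1: "r \<le> sqrt (real n)" unfolding r_def rate_def by simp
        have r2: "r * lm \<le> real n"
        proof (cases "lm = 0")
          case True then show ?thesis by simp
        next
          case False
          then have "lm > 0" using lm0 by simp
          have "r \<le> real n / lm" unfolding r_def rate_def using False by simp
          then show ?thesis using \<open>lm > 0\<close> by (simp add: le_divide_eq)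
        qed
        have db: "c * real n * norm (beta_AL (X n) n (lam n) (resp (X n) beta eps \<omega>) - beta)
           \<le> 2 * norm (Zv n \<omega>) + 2 * real CARD('p) * lm / \<eta>"
          unfolding Zv_def
          by (rule det_bound[OF c npos[OF n] cb[OF n] lam_nonneg lmge \<eta>pos])
             (use Lbig in \<open>auto simp: L_def\<close>)
        define dd where "dd = norm (beta_AL (X n) n (lam n) (resp (X n) beta eps \<omega>) - beta)"
        have "c * real n * (r * dd) \<le> r * (2 * norm (Zv n \<omega>) + 2 * real CARD('p) * lm / \<eta>)"
          using mult_left_mono[OF db r0] unfolding dd_def by (simp add: mult_ac)
        also have "\<dots> = 2 * (r * norm (Zv n \<omega>)) + 2 * real CARD('p) * (r * lm) / \<eta>"
          by (simp add: algebra_simps)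
        also have "\<dots> \<le> 2 * (T * real n) + 2 * real CARD('p) * real n / \<eta>"
        proof (intro add_mono mult_left_mono divide_right_mono)
          have "r * norm (Zv n \<omega>) \<le> sqrt (real n) * (T * sqrt (real n))"
            using r0 r1 Zle by (intro mult_mono) auto
          then show "r * norm (Zv n \<omega>) \<le> T * real n" by (simp add: mult_ac)
        qed (use r2 \<eta>pos in auto)
        also have "\<dots> = c * real n * K"
          unfolding K_def using c \<eta>pos npos[OF n] by (simp add: divide_simps) (simp add: algebra_simps)
        finally have "r * dd \<le> K" using c npos[OF n] by (simp add: mult_le_cancel_left_pos)
        then show False using \<omega> unfolding r_def lm_def dd_def by simp
      qed
    qed
    have "P.prob {\<omega> \<in> space M. K < rate n (lam_max (lam n)) * norm (beta_AL (X n) n (lam n) (resp (X n) beta eps \<omega>) - beta)}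
        \<le> P.prob bad" by (rule P.finite_measure_mono[OF incl bads])
    then show "P.prob {\<omega> \<in> space M. K < rate n (lam_max (lam n)) * norm (beta_AL (X n) n (lam n) (resp (X n) beta eps \<omega>) - beta)} \<le> \<delta>"
      using badp by linarith
  qed
qed


end
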